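(* Let $L$ be a $\kappa$-frame. Every congruence $C\in\mathbb{C}L$ is a meet of clear congruences; namely $C=\bigwedge\{\partial_I\mid I\in\mathfrak{H}_\kappa L,\ \partial_I\ge C\}$.
   Context: $\kappa$ is a fixed regular cardinal; a $\kappa$-frame is a bounded distributive lattice having joins of all subsets of cardinality $<\kappa$ and satisfying the frame distributive law for such joins. A $\kappa$-ideal is a downset in which every subset of cardinality $<\kappa$ has an upper bound; $\mathfrak{H}_\kappa L$ is the set of $\kappa$-ideals. A congruence is an equivalence relation that is a sub-$\kappa$-frame of $L\times L$; $\mathbb{C}L$ is the frame of congruences under inclusion. For a $\kappa$-ideal $I$, $\partial_I=\{(a,b)\in L\times L\mid \forall x\in L:\ a\wedge x\in I\iff b\wedge x\in I\}$; a congruence is clear if it equals $\partial_I$ for some $\kappa$-ideal $I$. *)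

theory Defs
  imports Main
begin

definition regular_cardinal :: "'k rel \<Rightarrow> bool" where
  "regular_cardinal \<kappa> \<longleftrightarrow> Card_order \<kappa> \<and> Cinfinite \<kappa> \<and> regularCard \<kappa>"

definition small :: "'k rel \<Rightarrow> 'a set \<Rightarrow> bool" where
  "small \<kappa> S \<longleftrightarrow> ordLess2 (card_of S) \<kappa>"

definition is_lub :: "'a::order set \<Rightarrow> 'a \<Rightarrow> bool" where
  "is_lub S s \<longleftrightarrow> (\<forall>x\<in>S. x \<le> s) \<and> (\<forall>u. (\<forall>x\<in>S. x \<le> u) \<longrightarrow> s \<le> u)"

definition kjoin :: "'a::order set \<Rightarrow> 'a" where
  "kjoin S = (THE s. is_lub S s)"

definition kframe :: "'k rel \<Rightarrow> 'a::{distrib_lattice,bounded_lattice} itself \<Rightarrow> bool" where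
  "kframe \<kappa> _ \<longleftrightarrow>
     (\<forall>S::'a set. small \<kappa> S \<longrightarrow> (\<exists>s. is_lub S s)) \<and>
     (\<forall>(a::'a) S. small \<kappa> S \<longrightarrow> inf a (kjoin S) = kjoin ((\<lambda>s. inf a s) ` S))"

definition kideal :: "'k rel \<Rightarrow> 'a::order set \<Rightarrow> bool" where
  "kideal \<kappa> I \<longleftrightarrow>
     (\<forall>x y. y \<in> I \<longrightarrow> x \<le> y \<longrightarrow> x \<in> I) \<and>
     (\<forall>S. S \<subseteq> I \<longrightarrow> small \<kappa> S \<longrightarrow> (\<exists>u\<in>I. \<forall>x\<in>S. x \<le> u))"

definition congruence :: "'k rel \<Rightarrow> ('a::{distrib_lattice,bounded_lattice} \<times> 'a) set \<Rightarrow> bool" where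
  "congruence \<kappa> C \<longleftrightarrow>
     equiv UNIV C \<and>
     (bot, bot) \<in> C \<and> (top, top) \<in> C \<and>
     (\<forall>a b c d. (a, b) \<in> C \<longrightarrow> (c, d) \<in> C \<longrightarrow> (inf a c, inf b d) \<in> C) \<and>
     (\<forall>S. S \<subseteq> C \<longrightarrow> small \<kappa> S \<longrightarrow> (kjoin (fst ` S), kjoin (snd ` S)) \<in> C)"

definition partial_I :: "'a::lattice set \<Rightarrow> ('a \<times> 'a) set" where
  "partial_I I = {(a, b). \<forall>x. inf a x \<in> I \<longleftrightarrow> inf b x \<in> I}"

end

theory Submission
  imports Defs
begin

lemma lub_kjoin:
  fixes S :: "'a::order set"
  assumes "\<exists>s. is_lub S s"
  shows "is_lub S (kjoin S)"
proof -
  obtain s where s: "is_lub S s" using assms by blast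
  have u: "\<And>t. is_lub S t \<Longrightarrow> t = s" using s unfolding is_lub_def
    by (meson order_antisym)
  show ?thesis unfolding kjoin_def using s u by (rule theI)
qed

lemma cong_props:
  assumes "congruence \<kappa> C"
  shows "\<And>x. (x,x) \<in> C" "\<And>x y. (x,y) \<in> C \<Longrightarrow> (y,x) \<in> C"
    "\<And>x y z. (x,y) \<in> C \<Longrightarrow> (y,z) \<in> C \<Longrightarrow> (x,z) \<in> C"
    "\<And>a b c d. (a, b) \<in> C \<Longrightarrow> (c, d) \<in> C \<Longrightarrow> (inf a c, inf b d) \<in> C"
proof -
  have e: "equiv UNIV C" and m: "\<forall>a b c d. (a, b) \<in> C \<longrightarrow> (c, d) \<in> C \<longrightarrow> (inf a c, inf b d) \<in> C"
    using assms unfolding congruence_def by blast+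
  show "\<And>x. (x,x) \<in> C" using e by (simp add: equiv_def refl_on_def)
  show "\<And>x y. (x,y) \<in> C \<Longrightarrow> (y,x) \<in> C" using e by (meson equiv_def symD)
  show "\<And>x y z. (x,y) \<in> C \<Longrightarrow> (y,z) \<in> C \<Longrightarrow> (x,z) \<in> C" using e by (meson equiv_def transD)
  show "\<And>a b c d. (a, b) \<in> C \<Longrightarrow> (c, d) \<in> C \<Longrightarrow> (inf a c, inf b d) \<in> C" using m by blast
qed

lemma ideal_b:
  fixes \<kappa> :: "'k rel" and C :: "('a::{distrib_lattice,bounded_lattice} \<times> 'a) set"
  assumes fr: "kframe \<kappa> TYPE('a)" and cg: "congruence \<kappa> C"
  shows "kideal \<kappa> {x. (x, inf x b) \<in> C}" and "C \<subseteq> partial_I {x. (x, inf x b) \<in> C}"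
proof -
  note cp = cong_props[OF cg]
  show "kideal \<kappa> {x. (x, inf x b) \<in> C}"
    unfolding kideal_def
  proof (intro conjI allI impI)
    fix x y assume "y \<in> {x. (x, inf x b) \<in> C}" "x \<le> y"
    then have "(inf x y, inf x (inf y b)) \<in> C" using cp(1,4) by auto
    then show "x \<in> {x. (x, inf x b) \<in> C}" using \<open>x \<le> y\<close>
      by (simp add: inf_absorb1 inf_assoc[symmetric])
  next
    fix S assume S: "S \<subseteq> {x. (x, inf x b) \<in> C}" "small \<kappa> S"
    define T where "T = (\<lambda>x. (x, inf b x)) ` S"
    have TC: "T \<subseteq> C" using S(1) unfolding T_def by (auto simp: inf_commute)
    have "ordLess2 (card_of T) \<kappa>" using S(2) unfolding T_def small_def
      using card_of_image ordLeq_ordLess_trans by blast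
    then have "small \<kappa> T" unfolding small_def .
    then have "(kjoin (fst ` T), kjoin (snd ` T)) \<in> C" using cg TC unfolding congruence_def by blast
    moreover have "fst ` T = S" "snd ` T = (\<lambda>x. inf b x) ` S" unfolding T_def by force+
    moreover have "inf b (kjoin S) = kjoin ((\<lambda>x. inf b x) ` S)" using fr S(2) unfolding kframe_def by blast
    ultimately have "(kjoin S, inf (kjoin S) b) \<in> C" by (simp add: inf_commute)
    moreover have "is_lub S (kjoin S)" using fr S(2) lub_kjoin unfolding kframe_def by blast
    ultimately show "\<exists>u\<in>{x. (x, inf x b) \<in> C}. \<forall>x\<in>S. x \<le> u" unfolding is_lub_def by blast
  qed
  show "C \<subseteq> partial_I {x. (x, inf x b) \<in> C}"
  proof
    fix p assume "p \<in> C"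
    obtain c d where p: "p = (c,d)" by force
    have "inf c x \<in> {x. (x, inf x b) \<in> C} \<longleftrightarrow> inf d x \<in> {x. (x, inf x b) \<in> C}" for x
    proof -
      have r: "(inf c x, inf d x) \<in> C" using cp(1,4) \<open>p \<in> C\<close> p by blast
      have r2: "(inf (inf c x) b, inf (inf d x) b) \<in> C" using cp(1,4) r by blast
      show ?thesis using r r2 cp(2,3) by blast
    qed
    then show "p \<in> partial_I {x. (x, inf x b) \<in> C}" unfolding partial_I_def p by blast
  qed
qed

theorem mainTheorem10:
  fixes \<kappa> :: "'k rel" and C :: "('a::{distrib_lattice,bounded_lattice} \<times> 'a) set"
  assumes "regular_cardinal \<kappa>"
    and "kframe \<kappa> TYPE('a)"
    and "congruence \<kappa> C"
  shows "C = \<Inter> {partial_I I | I. kideal \<kappa> I \<and> C \<subseteq> partial_I I}"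
proof
  show "C \<subseteq> \<Inter> {partial_I I | I. kideal \<kappa> I \<and> C \<subseteq> partial_I I}" by blast
  show "\<Inter> {partial_I I | I. kideal \<kappa> I \<and> C \<subseteq> partial_I I} \<subseteq> C"
  proof
    fix p assume p: "p \<in> \<Inter> {partial_I I | I. kideal \<kappa> I \<and> C \<subseteq> partial_I I}"
    obtain a b where ab: "p = (a,b)" by force
    note cp = cong_props[OF assms(3)]
    have k: "\<And>z. partial_I {x. (x, inf x z) \<in> C} \<in> {partial_I I | I. kideal \<kappa> I \<and> C \<subseteq> partial_I I}"
    proof -
      fix z
      show "partial_I {x. (x, inf x z) \<in> C} \<in> {partial_I I | I. kideal \<kappa> I \<and> C \<subseteq> partial_I I}"
        using ideal_b[OF assms(2,3), of z] by blast
    qed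
    have "(a,b) \<in> partial_I {x. (x, inf x b) \<in> C}" using InterD[OF p k] ab by simp
    then have "inf a top \<in> {x. (x, inf x b) \<in> C} \<longleftrightarrow> inf b top \<in> {x. (x, inf x b) \<in> C}"
      unfolding partial_I_def by blast
    then have 1: "(a, inf a b) \<in> C" using cp(1) by simp
    have "(a,b) \<in> partial_I {x. (x, inf x a) \<in> C}" using InterD[OF p k] ab by simp
    then have "inf a top \<in> {x. (x, inf x a) \<in> C} \<longleftrightarrow> inf b top \<in> {x. (x, inf x a) \<in> C}"
      unfolding partial_I_def by blast
    then have 2: "(b, inf b a) \<in> C" using cp(1) by simp
    have "(inf a b, b) \<in> C" using 2 cp(2) by (simp add: inf_commute)
    then show "p \<in> C" using 1 cp(3) ab by blast
  qed
qed

end
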